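(* Let $\gamma:\mathbb{R}\to{\rm AdS}$ be a null curve (standing assumptions) with constant bending $\kappa<-1$. Then $\gamma$ is closed (periodic) if and only if $\frac{\rho_+}{\rho_-}\in\mathbb{Q}$, where $\rho_\pm=2\pi/\sqrt{|\kappa\pm1|}$; equivalently, if and only if $\kappa=-\dfrac{m^2+n^2}{m^2-n^2}$ for some relatively prime natural numbers $m>n$.
   Context: ${\rm AdS}={\rm SL}(2,\mathbb{R})$ with the Lorentzian metric induced by the polarization $\langle\cdot,\cdot\rangle$ of $q(X)=-\det X$ on real $2\times2$ matrices. Null curves ($\langle\gamma',\gamma'\rangle=0$) are assumed future-directed, without inflection points ($\gamma'\wedge\gamma''\neq0$), and parametrized by proper time ($\langle\gamma'',\gamma''\rangle=4$). The bending is $\kappa=-\frac1{16}\langle\gamma''',\gamma'''\rangle$. Such a curve admits a spinor frame field $(F_+,F_-)$ with values in ${\rm SL}(2,\mathbb{R})^2$, $\gamma=F_+F_-^{-1}$, satisfying $F_\pm'=F_\pm\begin{pmatrix}0&\kappa\pm1\\1&0\end{pmatrix}$. *)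

theory Defs
  imports "HOL-Analysis.Analysis"
begin

text \<open>AdS = SL(2,R) inside the space of real 2x2 matrices, with the quadratic
form q(X) = - det X and its polarization.\<close>

definition adsq :: "real^2^2 \<Rightarrow> real" where
  "adsq X = - det X"

definition adsinner :: "real^2^2 \<Rightarrow> real^2^2 \<Rightarrow> real" where
  "adsinner X Y = (adsq (X + Y) - adsq X - adsq Y) / 2"

definition in_AdS :: "real^2^2 \<Rightarrow> bool" where
  "in_AdS X \<longleftrightarrow> det X = 1"

text \<open>Time orientation: the timelike left-invariant field X * T0 with
T0 = [[0,1],[-1,0]] is declared future-directed; a causal vector V at X is
future-directed iff adsinner V (X * T0) < 0.\<close>

definition T0 :: "real^2^2" where
  "T0 = (\<chi> i j. if i = 1 \<and> j = 2 then 1 else if i = 2 \<and> j = 1 then -1 else 0)"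

definition future_directed :: "real^2^2 \<Rightarrow> real^2^2 \<Rightarrow> bool" where
  "future_directed X V \<longleftrightarrow> adsinner V (X ** T0) < 0"

text \<open>Standing assumptions: null, future-directed, no inflection points
(gamma' and gamma'' linearly independent, i.e. gamma' wedge gamma'' nonzero),
parametrized by proper time.\<close>

definition null_curve :: "(real \<Rightarrow> real^2^2) \<Rightarrow> (nat \<Rightarrow> real \<Rightarrow> real^2^2) \<Rightarrow> bool" where
  "null_curve \<gamma> D \<longleftrightarrow>
     D 0 = \<gamma> \<and>
     (\<forall>k t. (D k has_vector_derivative D (Suc k) t) (at t)) \<and>
     (\<forall>t. in_AdS (\<gamma> t)) \<and>
     (\<forall>t. adsinner (D 1 t) (D 1 t) = 0) \<and>
     (\<forall>t. future_directed (\<gamma> t) (D 1 t)) \<and>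
     (\<forall>t. \<forall>a b. a *\<^sub>R D 1 t + b *\<^sub>R D 2 t = 0 \<longrightarrow> a = 0 \<and> b = 0) \<and>
     (\<forall>t. adsinner (D 2 t) (D 2 t) = 4)"

definition bending :: "(nat \<Rightarrow> real \<Rightarrow> real^2^2) \<Rightarrow> real \<Rightarrow> real" where
  "bending D t = - (1/16) * adsinner (D 3 t) (D 3 t)"

definition closed_curve :: "(real \<Rightarrow> 'a) \<Rightarrow> bool" where
  "closed_curve \<gamma> \<longleftrightarrow> (\<exists>T>0. \<forall>t. \<gamma> (t + T) = \<gamma> t)"

definition rho_plus :: "real \<Rightarrow> real" where
  "rho_plus \<kappa> = 2 * pi / sqrt \<bar>\<kappa> + 1\<bar>"

definition rho_minus :: "real \<Rightarrow> real" where
  "rho_minus \<kappa> = 2 * pi / sqrt \<bar>\<kappa> - 1\<bar>"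

end

theory Submission imports Defs begin

lemma adsinner_coord: "adsinner X Y = -(X$1$1*Y$2$2 + Y$1$1*X$2$2 - X$1$2*Y$2$1 - Y$1$2*X$2$1)/2"
  by (simp add: adsinner_def adsq_def det_2 algebra_simps)
lemma adsinner_sym: "adsinner X Y = adsinner Y X"
  by (simp add: adsinner_coord algebra_simps)
lemma bil: "bilinear adsinner"
  unfolding bilinear_def by (auto intro!: linearI simp: adsinner_coord diff_divide_distrib add_divide_distrib algebra_simps)
lemma bbil: "bounded_bilinear adsinner"
  using bil bilinear_conv_bounded_bilinear by blast

lemmas ai_add_left = bounded_bilinear.add_left[OF bbil]
lemmas ai_scale_left = bounded_bilinear.scaleR_left[OF bbil]
lemmas ai_zero_left = bounded_bilinear.zero_left[OF bbil]
lemmas ai_diff_left = bounded_bilinear.diff_left[OF bbil]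
lemmas ai_add_right = bounded_bilinear.add_right[OF bbil]
lemmas ai_scale_right = bounded_bilinear.scaleR_right[OF bbil]
lemmas ai_diff_right = bounded_bilinear.diff_right[OF bbil]

lemma nondeg:
  fixes R :: "real^2^2"
  assumes "\<And>X. adsinner R X = 0"
  shows "R = 0"
proof -
  have "R$1$1 = 0" using assms[of "\<chi> i j. if i = 2 \<and> j = 2 then 1 else 0"] by (simp add: adsinner_coord)
  moreover have "R$2$2 = 0" using assms[of "\<chi> i j. if i = 1 \<and> j = 1 then 1 else 0"] by (simp add: adsinner_coord)
  moreover have "R$1$2 = 0" using assms[of "\<chi> i j. if i = 2 \<and> j = 1 then 1 else 0"] by (simp add: adsinner_coord)
  moreover have "R$2$1 = 0" using assms[of "\<chi> i j. if i = 1 \<and> j = 2 then 1 else 0"] by (simp add: adsinner_coord)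
  ultimately show ?thesis by (simp add: vec_eq_iff forall_2)
qed

lemma ortho_zero:
  fixes v0 v1 v2 v3 R :: "real^2^2"
  assumes g: "adsinner v0 v0 = -1" "adsinner v0 v1 = 0" "adsinner v0 v2 = 0" "adsinner v0 v3 = 0"
     "adsinner v1 v1 = 0" "adsinner v1 v2 = 0" "adsinner v1 v3 = -4" "adsinner v2 v2 = 4"
     "adsinner v2 v3 = 0" "adsinner v3 v3 = c"
   and o: "adsinner R v0 = 0" "adsinner R v1 = 0" "adsinner R v2 = 0" "adsinner R v3 = 0"
  shows "R = 0"
proof -
  have s: "adsinner x y = adsinner y x" for x y by (rule adsinner_sym)
  have d: "v0 \<noteq> v1" "v0 \<noteq> v2" "v0 \<noteq> v3" "v1 \<noteq> v2" "v1 \<noteq> v3" "v2 \<noteq> v3"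
    using g by (auto simp: s)
  define B where "B = {v0,v1,v2,v3}"
  have fin: "finite B" by (simp add: B_def)
  have cardB: "card B = 4" using d by (simp add: B_def)
  have ind: "independent B"
  proof -
    have "\<forall>v\<in>B. u v = 0" if h: "(\<Sum>v\<in>B. u v *\<^sub>R v) = 0" for u
    proof -
      have e: "u v0 *\<^sub>R v0 + (u v1 *\<^sub>R v1 + (u v2 *\<^sub>R v2 + u v3 *\<^sub>R v3)) = 0"
        using h d by (simp add: B_def)
      have W: "adsinner (u v0 *\<^sub>R v0 + (u v1 *\<^sub>R v1 + (u v2 *\<^sub>R v2 + u v3 *\<^sub>R v3))) w = 0" for w
        by (simp add: e ai_zero_left)
      have g': "adsinner v1 v0 = 0" "adsinner v2 v0 = 0" "adsinner v3 v0 = 0" "adsinner v2 v1 = 0"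
        "adsinner v3 v1 = -4" "adsinner v3 v2 = 0" using g by (simp_all add: s)
      from W[of v0] W[of v1] W[of v2] W[of v3] g g'
      show ?thesis by (simp add: ai_add_left ai_scale_left B_def)
    qed
    then show ?thesis using fin dependent_finite by blast
  qed
  have "UNIV \<subseteq> span B"
    using card_eq_dim[of B UNIV] fin cardB ind by simp
  have lin: "linear (adsinner R)"
    using bounded_bilinear.bounded_linear_right[OF bbil] bounded_linear.linear by blast
  have "adsinner R X = 0" for X
    using linear_eq_0_on_span[OF lin, of B X] \<open>UNIV \<subseteq> span B\<close> o by (auto simp: B_def)
  then show ?thesis by (rule nondeg)
qed

lemma hvd_sc:
  assumes "(f has_real_derivative f') (at t)"
  shows "((\<lambda>x. f x *\<^sub>R (c::'a::real_normed_vector)) has_vector_derivative f' *\<^sub>R c) (at t)"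
  using has_vector_derivative_scaleR[OF assms has_vector_derivative_const[of c]] by simp

lemma sol_deriv:
  assumes w: "w \<noteq> 0"
  shows "((\<lambda>t. cos (w*t) *\<^sub>R a + (sin (w*t) / w) *\<^sub>R (b::'a::real_normed_vector)) has_vector_derivative
     ((-w * sin (w*t)) *\<^sub>R a + cos (w*t) *\<^sub>R b)) (at t)"
proof -
  have c: "((\<lambda>t. cos (w*t)) has_real_derivative (-w * sin (w*t))) (at t)"
    by (auto intro!: derivative_eq_intros)
  have s: "((\<lambda>t. sin (w*t) / w) has_real_derivative cos (w*t)) (at t)"
    using w by (auto intro!: derivative_eq_intros)
  show ?thesis by (intro has_vector_derivative_add hvd_sc c s)
qed

lemma sol_deriv2:
  shows "((\<lambda>t. (-w * sin (w*t)) *\<^sub>R a + cos (w*t) *\<^sub>R (b::'a::real_normed_vector)) has_vector_derivative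
     ((-w * w * cos (w*t)) *\<^sub>R a + (-w * sin (w*t)) *\<^sub>R b)) (at t)"
proof -
  have c: "((\<lambda>t. cos (w*t)) has_real_derivative (-w * sin (w*t))) (at t)"
    by (auto intro!: derivative_eq_intros)
  have s: "((\<lambda>t. -w * sin (w*t)) has_real_derivative (-w * w * cos (w*t))) (at t)"
    by (auto intro!: derivative_eq_intros)
  show ?thesis by (intro has_vector_derivative_add hvd_sc c s)
qed

lemma ode2:
  fixes y y1 y2 :: "real \<Rightarrow> 'a::real_inner"
  assumes d1: "\<And>t. (y has_vector_derivative y1 t) (at t)"
    and d2: "\<And>t. (y1 has_vector_derivative y2 t) (at t)"
    and e: "\<And>t. y2 t = -(w^2) *\<^sub>R y t" and w: "w \<noteq> 0"
  shows "y t = cos (w*t) *\<^sub>R y 0 + (sin (w*t) / w) *\<^sub>R y1 0"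
proof -
  define z where "z t = y t - (cos (w*t) *\<^sub>R y 0 + (sin (w*t) / w) *\<^sub>R y1 0)" for t
  define z1 where "z1 t = y1 t - ((-w * sin (w*t)) *\<^sub>R y 0 + cos (w*t) *\<^sub>R y1 0)" for t
  have dz: "(z has_vector_derivative z1 t) (at t)" for t
    unfolding z_def z1_def using w
    by (intro has_vector_derivative_diff d1 sol_deriv)
  have dz1: "(z1 has_vector_derivative (-(w^2)) *\<^sub>R z t) (at t)" for t
  proof -
    have "(z1 has_vector_derivative (y2 t - ((-w * w * cos (w*t)) *\<^sub>R y 0 + (-w * sin (w*t)) *\<^sub>R y1 0))) (at t)"
      unfolding z1_def by (intro has_vector_derivative_diff d2 sol_deriv2)
    moreover have "y2 t - ((-w * w * cos (w*t)) *\<^sub>R y 0 + (-w * sin (w*t)) *\<^sub>R y1 0) = (-(w^2)) *\<^sub>R z t"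
      using w by (simp add: e z_def field_simps power2_eq_square scaleR_diff_right)
    ultimately show ?thesis by simp
  qed
  define E where "E t = inner (z1 t) (z1 t) + w^2 * inner (z t) (z t)" for t
  have dE: "(E has_real_derivative 0) (at t)" for t
  proof -
    have "(E has_vector_derivative (inner (z1 t) ((-(w^2)) *\<^sub>R z t) + inner ((-(w^2)) *\<^sub>R z t) (z1 t)
       + w^2 * (inner (z t) (z1 t) + inner (z1 t) (z t)))) (at t)"
      unfolding E_def
      by (intro has_vector_derivative_add has_vector_derivative_mult_right
          bounded_bilinear.has_vector_derivative[OF bounded_bilinear_inner] dz dz1)
    then show ?thesis
      by (simp add: has_real_derivative_iff_has_vector_derivative inner_commute algebra_simps)
  qed
  have "E t = E 0" using DERIV_isconst_all[of E] dE by blast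
  also have "E 0 = 0" by (simp add: E_def z_def z1_def)
  finally have "inner (z1 t) (z1 t) + w^2 * inner (z t) (z t) = 0" by (simp add: E_def)
  moreover have "inner (z1 t) (z1 t) \<ge> 0" by simp
  moreover have "w^2 > 0" using w by simp
  moreover have "inner (z t) (z t) \<ge> 0" by simp
  ultimately have "inner (z t) (z t) = 0"
    by (smt (verit) mult_pos_pos)
  then have "z t = 0" by simp
  then show ?thesis by (simp add: z_def)
qed

lemma gder:
  assumes hD: "\<forall>k t. (D k has_vector_derivative D (Suc k) t) (at t)"
  shows "((\<lambda>t. adsinner (D i t) (D j t)) has_real_derivative
           (adsinner (D i t) (D (Suc j) t) + adsinner (D (Suc i) t) (D j t))) (at t)"
  using bounded_bilinear.has_vector_derivative[OF bbil hD[rule_format, of i t] hD[rule_format, of j t]]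
  by (simp add: has_real_derivative_iff_has_vector_derivative)

lemma cderiv:
  assumes "\<forall>t. f t = (c::real)" "(f has_real_derivative d) (at t)"
  shows "d = 0"
proof -
  have "f = (\<lambda>_. c)" using assms(1) by auto
  then show ?thesis using assms(2) DERIV_const DERIV_unique by metis
qed

lemma curve_facts:
  assumes hD: "\<forall>k t. (D k has_vector_derivative D (Suc k) t) (at t)"
    and dt: "\<forall>t. det (D 0 t) = 1"
    and h11: "\<forall>t. adsinner (D 1 t) (D 1 t) = 0"
    and h22: "\<forall>t. adsinner (D 2 t) (D 2 t) = 4"
    and h33: "\<forall>t. adsinner (D 3 t) (D 3 t) = -16*\<kappa>"
  shows "\<forall>t. adsinner (D 0 t) (D 0 t) = -1 \<and> adsinner (D 0 t) (D 1 t) = 0 \<and>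
     adsinner (D 0 t) (D 2 t) = 0 \<and> adsinner (D 0 t) (D 3 t) = 0 \<and>
     D 4 t = (4*\<kappa>) *\<^sub>R D 2 t - 4 *\<^sub>R D 0 t"
proof
  fix t
  have s: "adsinner x y = adsinner y x" for x y by (rule adsinner_sym)
  have N: "Suc 0 = 1" "Suc (Suc 0) = 2" "Suc 1 = 2" "Suc 2 = 3" "Suc 3 = 4" by simp_all
  note gd = gder[OF hD, unfolded N]
  have g00: "\<forall>t. adsinner (D 0 t) (D 0 t) = -1"
  proof
    fix t show "adsinner (D 0 t) (D 0 t) = -1" using dt[rule_format, of t]
      by (simp add: adsinner_coord det_2)
  qed
  have C: "adsinner (D i t) (D (Suc j) t) + adsinner (D (Suc i) t) (D j t) = 0"
    if "\<forall>t. adsinner (D i t) (D j t) = c" for i j c t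
    using cderiv[OF that gd[of i j t]] .
  have g01: "\<forall>t. adsinner (D 0 t) (D 1 t) = 0"
    using C[OF g00, unfolded N] by (simp add: s)
  have g02: "\<forall>t. adsinner (D 0 t) (D 2 t) = 0"
    using C[OF g01, unfolded N] h11 by simp
  have g12: "\<forall>t. adsinner (D 1 t) (D 2 t) = 0"
    using C[OF h11, unfolded N] by (simp add: s)
  have g03: "\<forall>t. adsinner (D 0 t) (D 3 t) = 0"
    using C[OF g02, unfolded N] g12 by (simp add: s; smt (verit))
  have g23: "\<forall>t. adsinner (D 2 t) (D 3 t) = 0"
    using C[OF h22, unfolded N] by (simp add: s)
  have g13: "\<forall>t. adsinner (D 1 t) (D 3 t) = -4"
    using C[OF g12, unfolded N] h22 by (simp add: s; smt (verit))
  have g04: "\<forall>t. adsinner (D 0 t) (D 4 t) = 4"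
    using C[OF g03, unfolded N] g13 by (simp add: s; smt (verit))
  have g14: "\<forall>t. adsinner (D 1 t) (D 4 t) = 0"
    using C[OF g13, unfolded N] g23 by (simp add: s; smt (verit))
  have g34: "\<forall>t. adsinner (D 3 t) (D 4 t) = 0"
    using C[OF h33, unfolded N] by (simp add: s)
  have g24: "\<forall>t. adsinner (D 2 t) (D 4 t) = 16*\<kappa>"
    using C[OF g23, unfolded N] h33 by (simp add: s; smt (verit))
  define R where "R = D 4 t - (4*\<kappa>) *\<^sub>R D 2 t + 4 *\<^sub>R D 0 t"
  have "R = 0"
  proof (rule ortho_zero[of "D 0 t" "D 1 t" "D 2 t" "D 3 t" "-16*\<kappa>"])
    show "adsinner R (D 0 t) = 0" "adsinner R (D 1 t) = 0" "adsinner R (D 2 t) = 0" "adsinner R (D 3 t) = 0"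
      using g00 g01 g02 g03 g04 g12 g13 g14 g23 g24 g34 h11 h22 h33
      by (simp_all add: R_def ai_add_left ai_diff_left ai_scale_left ai_add_right ai_diff_right ai_scale_right s)
  qed (use g00 g01 g02 g03 g12 g13 g23 h11 h22 h33 in auto)
  then show "adsinner (D 0 t) (D 0 t) = -1 \<and> adsinner (D 0 t) (D 1 t) = 0 \<and>
     adsinner (D 0 t) (D 2 t) = 0 \<and> adsinner (D 0 t) (D 3 t) = 0 \<and>
     D 4 t = (4*\<kappa>) *\<^sub>R D 2 t - 4 *\<^sub>R D 0 t"
    using g00 g01 g02 g03 by (simp add: R_def algebra_simps)
qed


lemma ratio_rat:
  fixes a b :: real assumes "b > 0" "a > b"
  shows "(a+b)/(a-b) \<in> \<rat> \<longleftrightarrow> a/b \<in> \<rat>"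
proof -
  define r where "r = a/b"
  have r1: "r > 1" using assms by (simp add: r_def)
  have e1: "(a+b)/(a-b) = (r+1)/(r-1)" using assms by (simp add: r_def field_simps)
  define q where "q = (r+1)/(r-1)"
  have q1: "q \<noteq> 1" using r1 by (simp add: q_def field_simps)
  have e2: "r = (q+1)/(q-1)" using r1 q1 by (simp add: q_def field_simps)
  show ?thesis
  proof
    assume "(a+b)/(a-b) \<in> \<rat>"
    then have "q \<in> \<rat>" using e1 q_def by simp
    then have "(q+1)/(q-1) \<in> \<rat>" by (intro Rats_divide Rats_add Rats_diff) auto
    then show "a/b \<in> \<rat>" using e2 r_def by simp
  next
    assume "a/b \<in> \<rat>"
    then have "r \<in> \<rat>" using r_def by simp
    then have "(r+1)/(r-1) \<in> \<rat>" by (intro Rats_divide Rats_add Rats_diff) auto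
    then show "(a+b)/(a-b) \<in> \<rat>" using e1 by simp
  qed
qed

lemma kappa_rat:
  fixes \<kappa> :: real assumes k: "\<kappa> < -1"
  shows "sqrt (1-\<kappa>) / sqrt (-1-\<kappa>) \<in> \<rat> \<longleftrightarrow>
    (\<exists>m n :: nat. coprime m n \<and> n < m \<and>
               \<kappa> = - (real m ^ 2 + real n ^ 2) / (real m ^ 2 - real n ^ 2))"
proof -
  define a where "a = sqrt (1-\<kappa>)"
  define b where "b = sqrt (-1-\<kappa>)"
  have a2: "a^2 = 1-\<kappa>" using k by (simp add: a_def)
  have b2: "b^2 = -1-\<kappa>" using k by (simp add: b_def)
  have bp: "b > 0" using k by (simp add: b_def)
  have ap: "a > 0" using k by (simp add: a_def)
  show ?thesis unfolding a_def[symmetric] b_def[symmetric]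
  proof
    assume "a/b \<in> \<rat>"
    then obtain p q :: int where q: "q > 0" "coprime p q" "a/b = of_int p / of_int q"
      by (auto elim!: Rats_cases')
    have "a/b > 0" using ap bp by simp
    then have "(of_int p::real) / of_int q > 0" using q by simp
    then have p: "p > 0" using q by (simp add: zero_less_divide_iff)
    have e: "a * of_int q = b * of_int p" using q bp by (simp add: field_simps)
    then have "(a * of_int q)^2 = (b * of_int p)^2" by simp
    then have e2: "(1-\<kappa>) * of_int q ^2 = (-1-\<kappa>) * of_int p^2"
      by (simp add: power_mult_distrib a2 b2)
    have "a^2 > b^2" using a2 b2 by simp
    then have "a > b" using power_less_imp_less_base[of b 2 a] ap by simp
    then have "b * of_int p < a * of_int p" using p by (intro mult_strict_right_mono) auto
    then have "a * of_int q < a * of_int p" using e by simp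
    then have qp: "q < p" using ap by simp
    define m where "m = nat p"
    define n where "n = nat q"
    have pm: "p = int m" "q = int n" using p q by (simp_all add: m_def n_def)
    have "coprime m n" using q(2) pm by simp
    moreover have "n < m" using qp pm by simp
    moreover have "\<kappa> = - (real m ^ 2 + real n ^ 2) / (real m ^ 2 - real n ^ 2)"
    proof -
      have "real n ^ 2 < real m ^ 2" using \<open>n < m\<close> by (simp add: power_strict_mono)
      moreover have "(1-\<kappa>) * real n ^2 = (-1-\<kappa>) * real m^2" using e2 pm by simp
      ultimately have "\<kappa> * (real m ^ 2 - real n ^ 2) = - (real m ^ 2 + real n ^ 2)"
        by (simp add: algebra_simps)
      moreover have "real m ^ 2 - real n ^ 2 \<noteq> 0" using \<open>real n ^ 2 < real m ^ 2\<close> by linarith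
      ultimately show ?thesis by (simp add: eq_divide_eq)
    qed
    ultimately show "\<exists>m n :: nat. coprime m n \<and> n < m \<and>
               \<kappa> = - (real m ^ 2 + real n ^ 2) / (real m ^ 2 - real n ^ 2)" by blast
  next
    assume "\<exists>m n :: nat. coprime m n \<and> n < m \<and>
               \<kappa> = - (real m ^ 2 + real n ^ 2) / (real m ^ 2 - real n ^ 2)"
    then obtain m n :: nat where mn: "n < m" "\<kappa> = - (real m ^ 2 + real n ^ 2) / (real m ^ 2 - real n ^ 2)"
      by blast
    have lt: "real n ^ 2 < real m ^ 2" using mn by (simp add: power_strict_mono)
    have n0: "n > 0"
    proof (rule ccontr)
      assume "\<not> n > 0" then have "n = 0" by simp
      then have "\<kappa> = -1" using mn lt by simp
      then show False using k by simp
    qed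
    define M where "M = real m ^ 2"
    define N where "N = real n ^ 2"
    have ne: "M - N \<noteq> 0" using lt unfolding M_def N_def by linarith
    have kk: "\<kappa> * (M - N) = -(M+N)" using mn(2) ne by (simp add: M_def N_def)
    have i: "(1-\<kappa>)*N - (-1-\<kappa>)*M = (M+N) + \<kappa>*(M-N)" by (simp add: algebra_simps)
    have "(a * real n)^2 = (b * real m)^2"
      using i kk by (simp add: power_mult_distrib a2 b2 M_def N_def)
    then have "a * real n = b * real m"
      using ap bp n0 by (simp add: power2_eq_iff_nonneg)
    then have "a/b = real m / real n" using bp n0 by (simp add: field_simps)
    then show "a/b \<in> \<rat>" by simp
  qed
qed

lemma hvd_cs:
  assumes "(g has_vector_derivative g') (at t)"
  shows "((\<lambda>x. c *\<^sub>R (g x::'a::real_normed_vector)) has_vector_derivative c *\<^sub>R g') (at t)"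
  using has_vector_derivative_scaleR[OF DERIV_const assms, of c] by simp

lemma per_deriv:
  fixes f :: "real \<Rightarrow> 'a::real_normed_vector"
  assumes p: "\<forall>t. f (t+T) = f t" and d: "\<forall>t. (f has_vector_derivative f' t) (at t)"
  shows "\<forall>t. f' (t+T) = f' t"
proof
  fix t
  have sh: "((\<lambda>s. s+T) has_vector_derivative 1) (at t)"
    using has_vector_derivative_add[OF has_vector_derivative_id has_vector_derivative_const, of T "at t"]
    by simp
  have "((f \<circ> (\<lambda>s. s+T)) has_vector_derivative 1 *\<^sub>R f' (t+T)) (at t)"
    by (rule vector_diff_chain_at[OF sh]) (use d in simp)
  moreover have "f \<circ> (\<lambda>s. s+T) = f" using p by (auto simp: o_def)
  ultimately have "(f has_vector_derivative f' (t+T)) (at t)" by simp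
  then show "f' (t+T) = f' t" using d vector_derivative_unique_at by blast
qed

lemma D_per:
  assumes hD: "\<forall>k t. (D k has_vector_derivative D (Suc k) t) (at t)"
    and p: "\<forall>t. D 0 (t+T) = D 0 t"
  shows "\<forall>t. D k (t+T) = D k t"
proof (induction k)
  case 0 then show ?case using p by simp
next
  case (Suc k) then show ?case using per_deriv[of "D k" T "D (Suc k)"] hD by blast
qed

lemma cs_shift:
  assumes "x = y + (2*pi) * of_int k"
  shows "cos x = cos y" "sin x = sin y"
  using assms by (simp_all add: cos_add sin_add)

theorem mainTheorem8:
  fixes \<gamma> :: "real \<Rightarrow> real^2^2" and D :: "nat \<Rightarrow> real \<Rightarrow> real^2^2" and \<kappa> :: real
  assumes "null_curve \<gamma> D"
    and "\<forall>t. bending D t = \<kappa>"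
    and "\<kappa> < -1"
  shows "(closed_curve \<gamma> \<longleftrightarrow> rho_plus \<kappa> / rho_minus \<kappa> \<in> \<rat>) \<and>
         (closed_curve \<gamma> \<longleftrightarrow>
            (\<exists>m n :: nat. coprime m n \<and> n < m \<and>
               \<kappa> = - (real m ^ 2 + real n ^ 2) / (real m ^ 2 - real n ^ 2)))"
proof -
  have k: "\<kappa> < -1" by fact
  have D0: "D 0 = \<gamma>" and hD: "\<forall>k t. (D k has_vector_derivative D (Suc k) t) (at t)"
    and dt: "\<forall>t. det (D 0 t) = 1"
    and h11: "\<forall>t. adsinner (D 1 t) (D 1 t) = 0"
    and h22: "\<forall>t. adsinner (D 2 t) (D 2 t) = 4"
    using assms(1) by (auto simp: null_curve_def in_AdS_def)
  have h33: "\<forall>t. adsinner (D 3 t) (D 3 t) = -16*\<kappa>"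
    using assms(2) by (auto simp: bending_def)
  note F = curve_facts[OF hD dt h11 h22 h33]
  define a where "a = sqrt (1-\<kappa>)"
  define b where "b = sqrt (-1-\<kappa>)"
  have a2: "a^2 = 1-\<kappa>" using k by (simp add: a_def)
  have b2: "b^2 = -1-\<kappa>" using k by (simp add: b_def)
  have bp: "b > 0" using k by (simp add: b_def)
  have ap: "a > 0" using k by (simp add: a_def)
  have "a^2 > b^2" using a2 b2 by simp
  then have ab: "a > b" using power_less_imp_less_base[of b 2 a] ap by simp
  define al where "al = a + b"
  define be where "be = a - b"
  have alp: "al > 0" and bep: "be > 0" using ap bp ab by (simp_all add: al_def be_def)
  have s1: "4*\<kappa> + be^2 = -(al^2)" and s2: "4*\<kappa> + al^2 = -(be^2)"
    using a2 b2 by (simp_all add: al_def be_def power2_eq_square algebra_simps)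
  have s3: "al^2 * be^2 = 4"
  proof -
    have "al * be = a^2 - b^2" by (simp add: al_def be_def power2_eq_square algebra_simps)
    then have "al * be = 2" using a2 b2 by simp
    then have "(al*be)^2 = 4" by simp
    then show ?thesis by (simp add: power_mult_distrib)
  qed
  have dpos: "al^2 - be^2 > 0" using alp bep ab bp
    by (simp add: al_def be_def power2_eq_square algebra_simps)
  \<comment> \<open>the two harmonic components\<close>
  define P where "P t = D 2 t + be^2 *\<^sub>R D 0 t" for t
  define P1 where "P1 t = D 3 t + be^2 *\<^sub>R D 1 t" for t
  define Q where "Q t = D 2 t + al^2 *\<^sub>R D 0 t" for t
  define Q1 where "Q1 t = D 3 t + al^2 *\<^sub>R D 1 t" for t
  have N: "Suc 0 = 1" "Suc 1 = 2" "Suc 2 = 3" "Suc 3 = 4" by simp_all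
  have dd: "\<And>k t. (D k has_vector_derivative D (Suc k) t) (at t)" using hD by blast
  note dd' = dd[of 0, unfolded N] dd[of 1, unfolded N] dd[of 2, unfolded N] dd[of 3, unfolded N]
  have dP: "(P has_vector_derivative P1 t) (at t)" for t
    unfolding P_def[abs_def] P1_def
    by (intro has_vector_derivative_add hvd_cs dd')
  have dP1: "(P1 has_vector_derivative (D 4 t + be^2 *\<^sub>R D 2 t)) (at t)" for t
    unfolding P1_def[abs_def]
    by (intro has_vector_derivative_add hvd_cs dd')
  have dQ: "(Q has_vector_derivative Q1 t) (at t)" for t
    unfolding Q_def[abs_def] Q1_def
    by (intro has_vector_derivative_add hvd_cs dd')
  have dQ1: "(Q1 has_vector_derivative (D 4 t + al^2 *\<^sub>R D 2 t)) (at t)" for t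
    unfolding Q1_def[abs_def]
    by (intro has_vector_derivative_add hvd_cs dd')
  have eP: "D 4 t + be^2 *\<^sub>R D 2 t = -(al^2) *\<^sub>R P t" for t
  proof -
    have "D 4 t = (4*\<kappa>) *\<^sub>R D 2 t - 4 *\<^sub>R D 0 t" using F by blast
    also have "\<dots> = (-(al^2) - be^2) *\<^sub>R D 2 t - (al^2 * be^2) *\<^sub>R D 0 t"
    proof -
      have e1: "-(al^2) - be^2 = 4*\<kappa>" using s1 by linarith
      show ?thesis by (simp only: e1 s3)
    qed
    finally show ?thesis by (simp add: P_def algebra_simps)
  qed
  have eQ: "D 4 t + al^2 *\<^sub>R D 2 t = -(be^2) *\<^sub>R Q t" for t
  proof -
    have "D 4 t = (4*\<kappa>) *\<^sub>R D 2 t - 4 *\<^sub>R D 0 t" using F by blast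
    also have "\<dots> = (-(be^2) - al^2) *\<^sub>R D 2 t - (al^2 * be^2) *\<^sub>R D 0 t"
    proof -
      have e1: "-(be^2) - al^2 = 4*\<kappa>" using s2 by linarith
      show ?thesis by (simp only: e1 s3)
    qed
    finally show ?thesis by (simp add: Q_def algebra_simps)
  qed
  have PF: "P t = cos (al*t) *\<^sub>R P 0 + (sin (al*t) / al) *\<^sub>R P1 0" for t
    by (rule ode2[OF dP dP1 eP]) (use alp in simp)
  have QF: "Q t = cos (be*t) *\<^sub>R Q 0 + (sin (be*t) / be) *\<^sub>R Q1 0" for t
    by (rule ode2[OF dQ dQ1 eQ]) (use bep in simp)
  have GF: "\<gamma> t = (1/(al^2 - be^2)) *\<^sub>R (Q t - P t)" for t
  proof -
    have "Q t - P t = (al^2 - be^2) *\<^sub>R D 0 t" by (simp add: P_def Q_def algebra_simps)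
    then show ?thesis using dpos D0 by simp
  qed
  have rho: "rho_plus \<kappa> / rho_minus \<kappa> = a / b"
    using k ap bp by (simp add: rho_plus_def rho_minus_def a_def b_def abs_if)
  have qr: "al / be \<in> \<rat> \<longleftrightarrow> a / b \<in> \<rat>"
    unfolding al_def be_def by (rule ratio_rat[OF bp ab])
  have closed_iff: "closed_curve \<gamma> \<longleftrightarrow> al / be \<in> \<rat>"
  proof
    assume "closed_curve \<gamma>"
    then obtain T where T: "T > 0" "\<forall>t. \<gamma> (t + T) = \<gamma> t" by (auto simp: closed_curve_def)
    have per: "\<forall>t. D k (t+T) = D k t" for k using D_per[OF hD] T(2) D0 by simp
    have g00: "adsinner (D 0 0) (D 0 0) = -1" and g01: "adsinner (D 0 0) (D 1 0) = 0"
      and g02: "adsinner (D 0 0) (D 2 0) = 0" and g03: "adsinner (D 0 0) (D 3 0) = 0"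
      using F by blast+
    have s: "adsinner x y = adsinner y x" for x y by (rule adsinner_sym)
    have i0: "adsinner (P 0) (D 0 0) = -(be^2)" "adsinner (P1 0) (D 0 0) = 0"
      "adsinner (Q 0) (D 0 0) = -(al^2)" "adsinner (Q1 0) (D 0 0) = 0"
      using g00 g01 g02 g03
      by (simp_all add: P_def P1_def Q_def Q1_def ai_add_left ai_scale_left ai_add_right ai_scale_right s)
    have "P T = P 0" using per[of 2] per[of 0] by (simp add: P_def) (metis add_0)
    then have "adsinner (P T) (D 0 0) = adsinner (P 0) (D 0 0)" by simp
    then have "cos (al*T) * (-(be^2)) = -(be^2)"
      using PF[of T] i0 by (simp add: ai_add_left ai_scale_left)
    then have "cos (al*T) = 1" using bep by simp
    then obtain n :: int where n: "al * T = n * 2 * pi" by (auto simp: cos_one_2pi_int)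
    have "Q T = Q 0" using per[of 2] per[of 0] by (simp add: Q_def) (metis add_0)
    then have "adsinner (Q T) (D 0 0) = adsinner (Q 0) (D 0 0)" by simp
    then have "cos (be*T) * (-(al^2)) = -(al^2)"
      using QF[of T] i0 by (simp add: ai_add_left ai_scale_left)
    then have "cos (be*T) = 1" using alp by simp
    then obtain m :: int where m: "be * T = m * 2 * pi" by (auto simp: cos_one_2pi_int)
    have "m \<noteq> 0" using m bep T(1) by auto
    have "al / be = (al * T) / (be * T)" using T(1) by simp
    also have "\<dots> = of_int n / of_int m" using n m by simp
    finally show "al / be \<in> \<rat>" by simp
  next
    assume "al / be \<in> \<rat>"
    then obtain n m :: int where nm: "m > 0" "al / be = of_int n / of_int m"
      by (auto elim!: Rats_cases')
    define T where "T = 2 * pi * of_int m / be"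
    have Tp: "T > 0" using nm bep by (simp add: T_def)
    have bT: "be * T = (2*pi) * of_int m" using bep by (simp add: T_def)
    have aT: "al * T = (2*pi) * of_int n"
    proof -
      have "al * T = 2 * pi * of_int m * (al / be)" using bep by (simp add: T_def field_simps)
      also have "\<dots> = (2*pi) * of_int n" using nm by simp
      finally show ?thesis .
    qed
    have "\<gamma> (t + T) = \<gamma> t" for t
    proof -
      have c1: "cos (al*(t+T)) = cos (al*t)" "sin (al*(t+T)) = sin (al*t)"
        by (rule cs_shift[of _ _ n], simp add: distrib_left aT)+
      have c2: "cos (be*(t+T)) = cos (be*t)" "sin (be*(t+T)) = sin (be*t)"
        by (rule cs_shift[of _ _ m], simp add: distrib_left bT)+
      show ?thesis unfolding GF PF[of "t+T"] QF[of "t+T"] PF[of t] QF[of t] c1 c2 ..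
    qed
    then show "closed_curve \<gamma>" using Tp by (auto simp: closed_curve_def)
  qed
  show ?thesis
    using closed_iff qr rho kappa_rat[OF k] by (simp add: a_def b_def)
qed

end
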